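(* Let $n \geq 4$, and let $\beta$ be an integer satisfying $-2 \leq 8\beta - 3n \leq 2$. Then for every $X \subseteq E(H_\beta)$, $$|X|(8\beta - 3n) + t(X) + n(n - 2\beta - 1)\left(2\beta - \frac{n}{2} + 1\right) \leq \frac{n^3}{16}.$$
   Context: Take $n$ vertices arranged in a circle. For distinct vertices $u,v$, $d(u,v) = 1 + |\{w: u,w,v \text{ distinct, in clockwise order}\}|$, and $d(u,u)=0$. $G_\beta$ is the digraph on these $n$ vertices with edge set $\{uv : 0 < d(u,v) \leq \beta\}$, and $H_\beta$ is its spanning subgraph with edge set $\{uv : d(u,v) = \beta\}$. For $X \subseteq E(H_\beta)$, $t(X)$ is the number of vertices incident with exactly one edge of $X$. *)

theory Defs
  imports Complex_Main
begin

text \<open>Vertices of the circle are 0,...,n-1, placed clockwise in increasing order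
  (indices taken mod n).\<close>

definition cw_order :: "nat \<Rightarrow> nat \<Rightarrow> nat \<Rightarrow> nat \<Rightarrow> bool" where
  "cw_order n u w v \<longleftrightarrow> u \<noteq> w \<and> w \<noteq> v \<and> u \<noteq> v \<and>
     (w + n - u) mod n < (v + n - u) mod n"

definition cdist :: "nat \<Rightarrow> nat \<Rightarrow> nat \<Rightarrow> nat" where
  "cdist n u v = (if u = v then 0
     else 1 + card {w. w < n \<and> cw_order n u w v})"

definition H_edges :: "nat \<Rightarrow> int \<Rightarrow> (nat \<times> nat) set" where
  "H_edges n \<beta> = {(u, v). u < n \<and> v < n \<and> int (cdist n u v) = \<beta>}"

definition G_edges :: "nat \<Rightarrow> int \<Rightarrow> (nat \<times> nat) set" where
  "G_edges n \<beta> = {(u, v). u < n \<and> v < n \<and> 0 < int (cdist n u v) \<and> int (cdist n u v) \<le> \<beta>}"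

definition t_count :: "nat \<Rightarrow> (nat \<times> nat) set \<Rightarrow> nat" where
  "t_count n X = card {v. v < n \<and> card {e \<in> X. fst e = v \<or> snd e = v} = 1}"

end

theory Submission
  imports Defs
begin

lemma modaux: "a < n \<Longrightarrow> ((a::nat) + n) mod n = a" by simp

lemma modaux2: "u \<le> (a::nat) \<Longrightarrow> a - u < n \<Longrightarrow> (a + n - u) mod n = a - u"
proof -
  assume h: "u \<le> a" "a - u < n"
  have "a + n - u = (a - u) + n" using h(1) by simp
  then show ?thesis using h(2) by (metis mod_add_self2 mod_less)
qed

lemma cw_set_lt:
  assumes "u < v" "v < n"
  shows "{w. w < n \<and> cw_order n u w v} = {u<..<v}"
proof -
  have vv: "(v + n - u) mod n = v - u" using assms by (intro modaux2) auto
  have "w < n \<and> cw_order n u w v \<longleftrightarrow> w \<in> {u<..<v}" for w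
  proof (cases "u \<le> w \<and> w < n")
    case True
    have m: "(w + n - u) mod n = w - u" using True by (intro modaux2) auto
    show ?thesis unfolding cw_order_def m vv using True assms by auto
  next
    case False
    show ?thesis
    proof (cases "w < n")
      case True
      then have m: "(w + n - u) mod n = w + n - u" using False by simp
      show ?thesis unfolding cw_order_def m vv using False True assms by auto
    qed (use assms in simp)
  qed
  then show ?thesis by blast
qed

lemma cw_set_gt:
  assumes "v < u" "u < n"
  shows "{w. w < n \<and> cw_order n u w v} = {u<..<n} \<union> {..<v}"
proof -
  have vv: "(v + n - u) mod n = v + n - u" using assms by simp
  have "w < n \<and> cw_order n u w v \<longleftrightarrow> w \<in> {u<..<n} \<union> {..<v}" for w
  proof (cases "u \<le> w \<and> w < n")
    case True
    have m: "(w + n - u) mod n = w - u" using True by (intro modaux2) auto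
    show ?thesis unfolding cw_order_def m vv using True assms by auto
  next
    case False
    show ?thesis
    proof (cases "w < n")
      case True
      then have m: "(w + n - u) mod n = w + n - u" using False by simp
      show ?thesis unfolding cw_order_def m vv using False True assms by auto
    qed (use assms in simp)
  qed
  then show ?thesis by blast
qed

lemma cdist_closed:
  assumes "u < n" "v < n" "u \<noteq> v"
  shows "cdist n u v = (if u < v then v - u else v + n - u)"
proof -
  have d: "cdist n u v = 1 + card {w. w < n \<and> cw_order n u w v}"
    unfolding cdist_def using assms(3) by simp
  show ?thesis
  proof (cases "u < v")
    case True
    have "card {w. w < n \<and> cw_order n u w v} = v - u - 1"
      unfolding cw_set_lt[OF True assms(2)] by simp
    then show ?thesis using d True by simp
  next
    case False
    then have vu: "v < u" using assms by simp
    have "card ({u<..<n} \<union> {..<v}) = n - u - 1 + v"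
      by (subst card_Un_disjoint) (use vu in auto)
    then have "card {w. w < n \<and> cw_order n u w v} = n - u - 1 + v"
      unfolding cw_set_gt[OF vu assms(1)] .
    then have "cdist n u v = v + n - u" using d vu assms(1) by linarith
    then show ?thesis using False by simp
  qed
qed

lemma key_counts:
  fixes n :: nat and \<beta> :: int and X :: "(nat \<times> nat) set"
  assumes b: "\<beta> \<ge> 1" and X: "X \<subseteq> H_edges n \<beta>"
  shows "t_count n X \<le> 2 * card X" "t_count n X + 2 * card X \<le> 2 * n"
proof -
  have Xsub: "X \<subseteq> {..<n} \<times> {..<n}" using X unfolding H_edges_def by auto
  have finX: "finite X" using Xsub finite_subset by blast
  have ne: "\<And>e. e \<in> X \<Longrightarrow> fst e \<noteq> snd e" using X b unfolding H_edges_def cdist_def by auto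
  have cd: "\<And>u v. (u,v) \<in> X \<Longrightarrow> int (cdist n u v) = \<beta> \<and> u < n \<and> v < n \<and> u \<noteq> v"
    using X ne unfolding H_edges_def by fastforce
  have inj1: "inj_on fst X"
  proof (rule inj_onI)
    fix x y assume xy: "x \<in> X" "y \<in> X" "fst x = fst y"
    obtain u v where x: "x = (u,v)" by (cases x)
    obtain u' v' where y: "y = (u',v')" by (cases y)
    have 1: "int (cdist n u v) = \<beta>" "u < n" "v < n" "u \<noteq> v" using cd xy x by auto
    have 2: "int (cdist n u v') = \<beta>" "v' < n" "u \<noteq> v'" using cd xy y x by auto
    have "cdist n u v = cdist n u v'" using 1 2 by simp
    then have "v = v'" using cdist_closed[of u n v] cdist_closed[of u n v'] 1 2
      by (auto split: if_splits)
    then show "x = y" using x y xy by simp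
  qed
  have inj2: "inj_on snd X"
  proof (rule inj_onI)
    fix x y assume xy: "x \<in> X" "y \<in> X" "snd x = snd y"
    obtain u v where x: "x = (u,v)" by (cases x)
    obtain u' v' where y: "y = (u',v')" by (cases y)
    have 1: "int (cdist n u v) = \<beta>" "u < n" "v < n" "u \<noteq> v" using cd xy x by auto
    have 2: "int (cdist n u' v) = \<beta>" "u' < n" "u' \<noteq> v" using cd xy y x by auto
    have "cdist n u v = cdist n u' v" using 1 2 by simp
    then have "u = u'" using cdist_closed[of u n v] cdist_closed[of u' n v] 1 2
      by (auto split: if_splits)
    then show "x = y" using x y xy by simp
  qed
  define U where "U = fst ` X \<union> snd ` X"
  define I where "I = fst ` X \<inter> snd ` X"
  have finU: "finite U" using finX U_def by simp
  have IU: "I \<subseteq> U" unfolding I_def U_def by auto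
  have Un: "U \<subseteq> {..<n}" using Xsub unfolding U_def by force
  have cU: "card U \<le> n" using card_mono[OF _ Un] by simp
  have sumUI: "card U + card I = 2 * card X"
    using card_Un_Int[of "fst ` X" "snd ` X"] finX card_image[OF inj1] card_image[OF inj2]
    unfolding U_def I_def by simp
  have A: "{v. v < n \<and> card {e \<in> X. fst e = v \<or> snd e = v} = 1} \<subseteq> U - I"
  proof
    fix v assume v: "v \<in> {v. v < n \<and> card {e \<in> X. fst e = v \<or> snd e = v} = 1}"
    then have c1: "card {e \<in> X. fst e = v \<or> snd e = v} = 1" by simp
    then obtain e where "{e \<in> X. fst e = v \<or> snd e = v} = {e}" by (rule card_1_singletonE)
    then have "e \<in> X" "fst e = v \<or> snd e = v" by auto
    then have vU: "v \<in> U" unfolding U_def by force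
    have "v \<notin> I"
    proof
      assume "v \<in> I"
      then obtain e1 e2 where e: "e1 \<in> X" "e2 \<in> X" "fst e1 = v" "snd e2 = v" unfolding I_def by auto
      have "e1 \<noteq> e2" using ne[of e2] e by auto
      moreover have "{e1, e2} \<subseteq> {e \<in> X. fst e = v \<or> snd e = v}" using e by auto
      ultimately have "2 \<le> card {e \<in> X. fst e = v \<or> snd e = v}"
        using card_mono[of "{e \<in> X. fst e = v \<or> snd e = v}" "{e1,e2}"] finX by auto
      then show False using c1 by simp
    qed
    then show "v \<in> U - I" using vU by simp
  qed
  have "t_count n X \<le> card (U - I)"
    unfolding t_count_def using card_mono[OF _ A] finU by simp
  also have "card (U - I) = card U - card I" using card_Diff_subset[OF _ IU] finU finite_subset[OF IU] by simp
  finally have t: "t_count n X \<le> card U - card I" .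
  show "t_count n X \<le> 2 * card X" using t sumUI by linarith
  have ci: "card I \<le> card U" by (rule card_mono[OF finU IU])
  show "t_count n X + 2 * card X \<le> 2 * n" using t sumUI cU ci by linarith
qed

lemma id_poly: fixes n::nat and \<beta>::int and c::int assumes "c = 8 * \<beta> - 3 * int n"
 shows "real n * real_of_int (int n - 2 * \<beta> - 1) * (2 * real_of_int \<beta> - real n / 2 + 1)
      = real n ^ 3 / 16 - real n * (real_of_int c + 4)^2 / 16"
proof -
  have h: "real_of_int c = 8*real_of_int \<beta> - 3*real n" using assms by simp
  show ?thesis unfolding h by (simp add: algebra_simps power2_eq_square power3_eq_cube divide_simps)
qed
lemma fin: fixes x t n :: real and c :: int
  assumes cs: "c = -2 \<or> c = -1 \<or> c = 0 \<or> c = 1 \<or> c = 2" and k1: "t \<le> 2*x" and k2: "t + 2*x \<le> 2*n" and t0: "0 \<le> t"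
  shows "x * real_of_int c + t \<le> n * (real_of_int c + 4)^2 / 16"
proof -
  consider "c = -2" | "c = -1" | "c = 0" | "c = 1" | "c = 2" using cs by blast
  then show ?thesis
  proof cases
    case 1 then show ?thesis using k1 k2 t0 by (simp add: power2_eq_square)
  next
    case 2 then show ?thesis using k1 k2 t0 by (simp add: power2_eq_square)
  next
    case 3 then show ?thesis using k1 k2 t0 by (simp add: power2_eq_square)
  next
    case 4 then show ?thesis using k1 k2 t0 by (simp add: power2_eq_square)
  next
    case 5 then show ?thesis using k1 k2 t0 by (simp add: power2_eq_square)
  qed
qed

theorem mainTheorem15:
  fixes n :: nat and \<beta> :: int and X :: "(nat \<times> nat) set"
  assumes "n \<ge> 4"
    and "-2 \<le> 8 * \<beta> - 3 * int n" and "8 * \<beta> - 3 * int n \<le> 2"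
    and "X \<subseteq> H_edges n \<beta>"
  shows "real (card X) * real_of_int (8 * \<beta> - 3 * int n) + real (t_count n X)
      + real n * real_of_int (int n - 2 * \<beta> - 1) * (2 * real_of_int \<beta> - real n / 2 + 1)
      \<le> real n ^ 3 / 16"
proof -
  define c where "c = 8 * \<beta> - 3 * int n"
  have b1: "\<beta> \<ge> 1" using assms by linarith
  note k = key_counts[OF b1 assms(4)]
  have k1: "real (t_count n X) \<le> 2 * real (card X)" using k(1) by linarith
  have k2: "real (t_count n X) + 2 * real (card X) \<le> 2 * real n" using k(2) by linarith
  have id: "real n * real_of_int (int n - 2 * \<beta> - 1) * (2 * real_of_int \<beta> - real n / 2 + 1)
      = real n ^ 3 / 16 - real n * (real_of_int c + 4)^2 / 16" by (rule id_poly[OF c_def])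
  have cs: "c = -2 \<or> c = -1 \<or> c = 0 \<or> c = 1 \<or> c = 2" using assms(2,3) c_def by linarith
  have "real (card X) * real_of_int c + real (t_count n X) \<le> real n * (real_of_int c + 4)^2 / 16"
    by (rule fin[OF cs k1 k2]) simp
  then show ?thesis using id unfolding c_def by linarith
qed

end
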